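(* Let $n\ge3$, $k\in\mathbf{N}$, $\mathbf{A}$ an alphabet of $n$ letters, and $$\mathbf{S}_3^{n,k}=\{XY : X,Y\in\mathbf{A}^*,\ |X|=|Y|\ge k+1,\ d(X,Y)\le k\}.$$ Then $\mathbf{S}_3^{n,k}$ is incomplete, i.e. there exist arbitrarily long (indeed, an infinite) words over $\mathbf{A}$ free from $\mathbf{S}_3^{n,k}$.
   Context: A word over $\mathbf{A}$ is a finite sequence of letters; $\mathbf{A}^*$ is the set of all words; $|X|$ is the length of $X$. For words of equal length, $d(X,Y)$ is the Hamming distance. A subword is a block of consecutive letters. For $\mathbf{S}\subseteq\mathbf{A}^*$, a word (finite or infinite) is free from $\mathbf{S}$ if none of its finite subwords belongs to $\mathbf{S}$. $\mathbf{S}$ is complete if there is $k\in\mathbf{N}$ such that every word free from $\mathbf{S}$ has length less than $k$; otherwise it is incomplete. *)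

theory Defs
  imports Main
begin

definition hamming :: "'a list \<Rightarrow> 'a list \<Rightarrow> nat" where
  "hamming X Y = length (filter (\<lambda>(x, y). x \<noteq> y) (zip X Y))"

definition subword :: "'a list \<Rightarrow> 'a list \<Rightarrow> bool" where
  "subword u w \<longleftrightarrow> (\<exists>p s. w = p @ u @ s)"

definition free_from :: "'a list set \<Rightarrow> 'a list \<Rightarrow> bool" where
  "free_from S w \<longleftrightarrow> (\<forall>u. subword u w \<longrightarrow> u \<notin> S)"

definition complete :: "'a set \<Rightarrow> 'a list set \<Rightarrow> bool" where
  "complete A S \<longleftrightarrow> (\<exists>k::nat. \<forall>w \<in> lists A. free_from S w \<longrightarrow> length w < k)"

definition incomplete :: "'a set \<Rightarrow> 'a list set \<Rightarrow> bool" where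
  "incomplete A S \<longleftrightarrow> \<not> complete A S"

definition S3 :: "'a set \<Rightarrow> nat \<Rightarrow> 'a list set" where
  "S3 A k = {X @ Y | X Y. X \<in> lists A \<and> Y \<in> lists A \<and> length X = length Y
              \<and> length X \<ge> k + 1 \<and> hamming X Y \<le> k}"

end

theory Submission
  imports Defs
begin


fun tm :: "nat \<Rightarrow> bool" where
  "tm n = (if n = 0 then False else if even n then tm (n div 2) else \<not> tm (n div 2))"

declare tm.simps[simp del]

lemma tm_even: "tm (2*n) = tm n"
  by (cases "n = 0") (simp_all add: tm.simps[of "2*n"] tm.simps[of 0])

lemma tm_odd: "tm (2*n+1) = (\<not> tm n)"
  by (subst tm.simps) simp

lemma tm_overlap_free:
  "0 < p \<Longrightarrow> \<exists>j\<le>p. tm (i+j) \<noteq> tm (i+j+p)"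
proof (induction p arbitrary: i rule: less_induct)
  case (less p)
  show ?case
  proof (rule ccontr)
    assume "\<not> ?case"
    hence eq: "\<And>j. j \<le> p \<Longrightarrow> tm (i+j) = tm (i+j+p)" by auto
    show False
    proof (cases "even p")
      case False
      have alt: "tm (i+j) \<noteq> tm (i+j+1)" if "j < p" for j
      proof (cases "even (i+j)")
        case True
        then obtain n where "i+j = 2*n" by (metis evenE)
        then show ?thesis using tm_even[of n] tm_odd[of n] by simp
      next
        case False2: False
        with \<open>odd p\<close> have "even (i+j+p)" by simp
        then obtain n where n: "i+j+p = 2*n" by (metis evenE)
        have "tm (i+j+p) \<noteq> tm (i+j+p+1)" using n tm_even[of n] tm_odd[of n] by simp
        moreover have "tm (i+j) = tm (i+j+p)" using eq[of j] that by simp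
        moreover have "tm (i+(j+1)) = tm (i+(j+1)+p)" using eq[of "j+1"] that by simp
        ultimately show ?thesis by (simp add: algebra_simps)
      qed
      have "j \<le> p \<Longrightarrow> tm (i+j) = (tm i = even j)" for j
      proof (induction j)
        case 0 then show ?case by simp
      next
        case (Suc j)
        then have "tm (i+j) \<noteq> tm (i+j+1)" using alt[of j] by simp
        with Suc show ?case by auto
      qed
      from this[of p] eq[of 0] False show False by simp
    next
      case True
      then obtain p' where p': "p = 2*p'" by (metis evenE)
      with less.prems have pp: "0 < p'" "p' < p" by auto
      show False
      proof (cases "even i")
        case True
        then obtain i' where i': "i = 2*i'" by (metis evenE)
        have "tm (i'+j) = tm (i'+j+p')" if "j \<le> p'" for j
          using eq[of "2*j"] that i' p' tm_even[of "i'+j"] tm_even[of "i'+j+p'"]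
          by (simp add: algebra_simps)
        with less.IH[OF pp(2) pp(1), of i'] show False by auto
      next
        case False
        then obtain i' where i': "i = 2*i'+1" by (metis oddE)
        have "tm (i'+j) = tm (i'+j+p')" if "j \<le> p'" for j
          using eq[of "2*j"] that i' p' tm_odd[of "i'+j"] tm_odd[of "i'+j+p'"]
          by (simp add: algebra_simps)
        with less.IH[OF pp(2) pp(1), of i'] show False by auto
      qed
    qed
  qed
qed

definition T :: "nat \<Rightarrow> int" where "T n = (if tm n then 1 else 0)"
definition dd :: "nat \<Rightarrow> int" where "dd n = T (n+1) - T n"

lemma dd_sqfree: "0 < m \<Longrightarrow> \<exists>j<m. dd (q+j) \<noteq> dd (q+m+j)"
proof (rule ccontr)
  assume m: "0 < m" and "\<not> (\<exists>j<m. dd (q+j) \<noteq> dd (q+m+j))"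
  hence eq: "\<And>j. j < m \<Longrightarrow> dd (q+j) = dd (q+m+j)" by auto
  have tel: "j \<le> m \<Longrightarrow> T (q+j) - T q = T (q+m+j) - T (q+m)" for j
  proof (induction j)
    case 0 then show ?case by simp
  next
    case (Suc j)
    then have "dd (q+j) = dd (q+m+j)" using eq[of j] by simp
    with Suc show ?case by (simp add: dd_def algebra_simps)
  qed
  show False
  proof (cases "T q = T (q+m)")
    case True
    have "tm (q+j) = tm (q+j+m)" if "j \<le> m" for j
      using tel[OF that] True by (auto simp: T_def add.commute add.left_commute split: if_splits)
    with tm_overlap_free[OF m, of q] show False by auto
  next
    case False
    have "T (q+m) - T q = T (q+m+m) - T (q+m)" using tel[of m] by simp
    with False show False by (auto simp: T_def split: if_splits)
  qed
qed



lemma cancel_le: "0 < (B::nat) \<Longrightarrow> q*B < x*B + B \<Longrightarrow> q \<le> x"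
proof -
  assume "0 < B" "q*B < x*B + B"
  hence "q*B < (x+1)*B" by simp
  hence "q < x+1" using mult_less_cancel2 by blast
  thus ?thesis by simp
qed

lemma ceil_ex: "c < (B::nat) \<Longrightarrow> \<exists>x. i \<le> x*B + c \<and> x*B + c < i + B"
proof -
  assume c: "c < B"
  define x where "x = (i + (B - 1 - c)) div B"
  have "x*B \<le> i + (B - 1 - c)" unfolding x_def by (metis div_mult_mod_eq le_add1)
  moreover have "i + (B - 1 - c) < x*B + B"
  proof -
    have "0 < B" using c by simp
    hence "(i + (B - 1 - c)) mod B < B" by simp
    moreover have "i + (B-1-c) = x*B + (i + (B-1-c)) mod B" unfolding x_def by simp
    ultimately show ?thesis by linarith
  qed
  ultimately show ?thesis using c by (intro exI[of _ x]) auto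
qed

lemma div_eqI': "0 < (B::nat) \<Longrightarrow> q*B \<le> j \<Longrightarrow> j < q*B + B \<Longrightarrow> j div B = q"
  by (metis add.commute div_nat_eqI mult.commute mult_Suc_right)

lemma jm_div:
  assumes "0 < (B::nat)" "s < B"
  shows "(j + (t*B + s)) div B = j div B + t + (if B \<le> j mod B + s then 1 else 0)"
proof -
  have j: "j = (j div B)*B + j mod B" by simp
  have o: "j mod B < B" using assms by simp
  have "j + (t*B+s) = (j div B + t)*B + (j mod B + s)" by (simp add: algebra_simps)
  hence "(j + (t*B + s)) div B = (j div B + t) + (j mod B + s) div B"
    using assms by (metis div_mult_self3 add.commute less_nat_zero_code not_gr_zero)
  moreover have "(j mod B + s) div B = (if B \<le> j mod B + s then 1 else 0)"
  proof (cases "B \<le> j mod B + s")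
    case True
    then have "(j mod B + s) = 1*B + (j mod B + s - B)" by simp
    moreover have "j mod B + s - B < B" using o assms by linarith
    ultimately show ?thesis using True assms by (metis div_mult_self3 div_less add.commute add_0 mult.commute not_gr_zero less_nat_zero_code)
  next
    case False then show ?thesis by simp
  qed
  ultimately show ?thesis by simp
qed

lemma cancel_lt: "q*(B::nat) < x*B \<Longrightarrow> q < x"
  using mult_less_cancel2 by blast

lemma block_count:
  fixes u :: "nat \<Rightarrow> 'b"
  assumes sf: "\<And>q m. 0 < m \<Longrightarrow> \<exists>j<m. u (q+j) \<noteq> u (q+m+j)"
    and B: "0 < B" and mB: "B \<le> m"
  shows "B \<le> card {j \<in> {i..<i+m}. u (j div B) \<noteq> u ((j+m) div B)}"
proof -
  define t where "t = m div B"
  define s where "s = m mod B"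
  have m_eq: "m = t*B + s" unfolding t_def s_def by simp
  have sB: "s < B" unfolding s_def using B by simp
  have t1: "1 \<le> t" unfolding t_def using B mB by (simp add: less_eq_div_iff_mult_less_eq)
  define W where "W = {i..<i+m}"
  define M where "M = {j \<in> W. u (j div B) \<noteq> u ((j+m) div B)}"
  have sq: "False" if "0 < n" "\<And>j. j < n \<Longrightarrow> u (q+j) = u (q+n+j)" for q n
    using sf[OF that(1), of q] that(2) by auto
  have adj: "u q \<noteq> u (Suc q)" for q
    using sf[of 1 q] by auto
  have finM: "finite M" unfolding M_def W_def by simp
  have viaT: "B \<le> card M" if "T \<subseteq> M" "B \<le> card T" for T
    using card_mono[OF finM that(1)] that(2) by simp
  have viaS: "B \<le> card M" if "W - S \<subseteq> M" "finite S" "card S + B \<le> m" for S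
  proof -
    have "card W - card S \<le> card (W - S)" using diff_card_le_card_Diff[OF that(2)] .
    moreover have "card (W - S) \<le> card M" using card_mono[OF finM that(1)] .
    moreover have "card W = m" unfolding W_def by simp
    ultimately show ?thesis using that(3) by linarith
  qed
  have misI: "j \<in> M" if "j \<in> W" "j div B = q"
      "B \<le> j mod B + s \<Longrightarrow> u q \<noteq> u (q+t+1)"
      "j mod B + s < B \<Longrightarrow> u q \<noteq> u (q+t)" for j q
  proof -
    have "(j+m) div B = q + t + (if B \<le> j mod B + s then 1 else 0)"
      using jm_div[OF B sB, of j t] that(2) m_eq by simp
    then show ?thesis unfolding M_def using that by (cases "B \<le> j mod B + s") auto
  qed
  have qj: "(j div B)*B \<le> j" "j < (j div B)*B + B" "j mod B = j - (j div B)*B" for j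
    using B div_mult_mod_eq[of j B] mod_less_divisor[OF B, of j] by linarith+
  have Wi: "i \<le> j" "j < i + m" if "j \<in> W" for j using that unfolding W_def by auto
  show ?thesis
  proof (cases "s = 0")
    case s0: True
    obtain y where y1: "i \<le> y*B" and y2: "y*B < i + B" using ceil_ex[OF B, of i] by auto
    have tm: "m = t*B" using m_eq s0 by simp
    have e1: "(y+t-1)*B + B = y*B + t*B"
    proof -
      have "(y+t-1)*B + B = (y+t-1+1)*B" by (simp add: add_mult_distrib)
      also have "y+t-1+1 = y+t" using t1 by simp
      finally show ?thesis by (simp add: add_mult_distrib)
    qed
    have "B \<le> card M"
    proof (cases "\<forall>q. y \<le> q \<and> q < y+t-1 \<longrightarrow> u q = u (q+t)")
      case allm: True
      define S where "S = {y*B..<(y+t-1)*B}"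
      have "W - S \<subseteq> M"
      proof
        fix j assume j: "j \<in> W - S"
        define q where "q = j div B"
        have q1: "q*B \<le> j" "j < q*B + B" using qj[of j] unfolding q_def by auto
        have ji: "i \<le> j" "j < i + m" using Wi j by auto
        show "j \<in> M"
        proof (cases "j < y*B")
          case True
          have "q < y" using cancel_lt[of q B y] q1 True by linarith
          moreover have "y \<le> q + 1"
          proof -
            have "(q+1)*B = q*B + B" by simp
            then have "y*B < (q+1)*B + B" using q1 ji y2 by linarith
            then show ?thesis using cancel_le[OF B, of y "q+1"] by simp
          qed
          ultimately have qy: "q + 1 = y" by simp
          have "u q \<noteq> u (q+t)"
          proof
            assume e: "u q = u (q+t)"
            show False
            proof (rule sq[of t q])
              fix j' assume "j' < t"
              then show "u (q+j') = u (q+t+j')" using e allm qy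
                by (cases j') (auto simp: algebra_simps)
            qed (use t1 in simp)
          qed
          then show ?thesis using misI[of j q] j s0 q_def mod_less_divisor[OF B, of j] by auto
        next
          case False
          with j have "(y+t-1)*B \<le> j" unfolding S_def by auto
          hence "y+t-1 \<le> q" using cancel_le[OF B, of "y+t-1" q] q1 by linarith
          moreover have "j < (y+t-1)*B + B"
          proof -
            have "(y+t-1)*B + B = (y+t-1+1)*B" by (simp add: add_mult_distrib)
            also have "y+t-1+1 = y+t" using t1 by simp
            finally have "(y+t-1)*B + B = y*B + t*B" by (simp add: add_mult_distrib)
            then show ?thesis using ji y1 tm by linarith
          qed
          hence "q \<le> y+t-1" using cancel_le[OF B, of q "y+t-1"] q1 by linarith
          ultimately have qy: "q = y+t-1" by simp
          have "u q \<noteq> u (q+t)"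
          proof
            assume e: "u q = u (q+t)"
            show False
            proof (rule sq[of t y])
              fix j' assume j': "j' < t"
              show "u (y+j') = u (y+t+j')"
              proof (cases "j' = t - 1")
                case True then show ?thesis using e qy t1 by (simp add: algebra_simps)
              next
                case False
                then show ?thesis using \<open>\<forall>q. y \<le> q \<and> q < y+t-1 \<longrightarrow> u q = u (q+t)\<close> j'
                  by (auto simp: algebra_simps)
              qed
            qed (use t1 in simp)
          qed
          then show ?thesis using misI[of j q] j s0 q_def mod_less_divisor[OF B, of j] by auto
        qed
      qed
      moreover have "card S + B \<le> m"
      proof -
        have c: "card S = (y+t-1)*B - y*B" by (simp add: S_def)
        have "B \<le> t*B" using t1 by simp
        then show ?thesis using c tm e1 by linarith
      qed
      ultimately show ?thesis using viaS[of S] unfolding S_def by simp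
    next
      case False
      then obtain q where q: "y \<le> q" "q < y+t-1" "u q \<noteq> u (q+t)" by auto
      define T where "T = {q*B..<q*B+B}"
      have "T \<subseteq> M"
      proof
        fix j assume j: "j \<in> T"
        have jq: "j div B = q" using div_eqI'[OF B, of q j] j unfolding T_def by auto
        have "y*B \<le> q*B" using q by simp
        moreover have "(q+1)*B \<le> (y+t-1)*B" using q by (intro mult_le_mono1) simp
        moreover have "(q+1)*B = q*B + B" by simp
        moreover have jT: "q*B \<le> j" "j < q*B + B" using j unfolding T_def by auto
        ultimately have "i \<le> j" "j < i + m" using y1 y2 tm e1 by linarith+
        then have "j \<in> W" unfolding W_def by simp
        then show "j \<in> M" using misI[of j q] jq q s0 mod_less_divisor[OF B, of j] by auto
      qed
      moreover have "card T = B" unfolding T_def by simp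
      ultimately show ?thesis using viaT by auto
    qed
    then show ?thesis unfolding M_def W_def .
  next
    case False
    hence s0: "0 < s" by simp
    define a where "a = B - s"
    have aB: "a + s = B" "a < B" "0 < a" using sB s0 unfolding a_def by auto
    obtain t' where t': "t = Suc t'" using t1 by (cases t) auto
    obtain x where x1: "i \<le> x*B + a" and x2: "x*B + a < i + B" using ceil_ex[OF aB(2), of i] by auto
    have mis_C: "j \<in> M" if "j \<in> W" "j div B = q" "a \<le> j - q*B" "u q \<noteq> u (q+t+1)" for j q
      using misI[of j q] that qj[of j] aB by auto
    have mis_A: "j \<in> M" if "j \<in> W" "j div B = q" "j - q*B < a" "u q \<noteq> u (q+t)" for j q
      using misI[of j q] that qj[of j] aB by auto
    have "B \<le> card M"
    proof (cases "\<forall>q. x \<le> q \<and> q < x+t \<longrightarrow> u q = u (q+t+1)")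
      case allC: True
      define S where "S = (\<Union>q\<in>{x..<x+t}. {q*B+a..<q*B+B})"
      have ext: "(x+t)*B = x*B + t*B" by (simp add: add_mult_distrib)
      have "W - S \<subseteq> M"
      proof
        fix j assume j: "j \<in> W - S"
        define q where "q = j div B"
        have qb: "q*B \<le> j" "j < q*B + B" using qj[of j] unfolding q_def by auto
        have ji: "i \<le> j" "j < i + m" using Wi j by auto
        have "q \<le> x + t" using cancel_le[OF B, of q "x+t"] qb ji ext x1 m_eq aB by linarith
        moreover have "x \<le> q + 1" using cancel_le[OF B, of x "q+1"] qb ji x2 aB
          by (simp add: add_mult_distrib)
        ultimately consider "q + 1 = x" | "x \<le> q \<and> q < x+t" | "q = x+t" by linarith
        then show "j \<in> M"
        proof cases
          case 1
          have "q*B + B = x*B" using 1 by (metis add_mult_distrib mult_1)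
          then have o: "a \<le> j - q*B" using ji x2 by linarith
          have "u q \<noteq> u (q+t+1)"
          proof
            assume e: "u q = u (q+t+1)"
            show False
            proof (rule sq[of "t+1" q])
              fix j' assume j': "j' < t+1"
              show "u (q+j') = u (q+(t+1)+j')"
              proof (cases j')
                case 0 then show ?thesis using e by simp
              next
                case (Suc j'')
                then have "u (x+j'') = u (x+j''+t+1)" using allC j' by auto
                then show ?thesis using Suc 1[symmetric] by (simp add: algebra_simps)
              qed
            qed simp
          qed
          then show ?thesis using mis_C[of j q] j o q_def by auto
        next
          case 2
          have o: "j - q*B < a"
          proof (rule ccontr)
            assume "\<not> j - q*B < a"
            then have "j \<in> {q*B+a..<q*B+B}" using qb by auto
            then have "j \<in> S" using 2 unfolding S_def by auto
            then show False using j by auto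
          qed
          have "u q = u (q+t+1)" using allC 2 by auto
          then have "u q \<noteq> u (q+t)" using adj[of "q+t"] by auto
          then show ?thesis using mis_A[of j q] j o q_def by auto
        next
          case 3
          show ?thesis
          proof (cases "a \<le> j - q*B")
            case True
            have "u q \<noteq> u (q+t+1)"
            proof
              assume e: "u q = u (q+t+1)"
              show False
              proof (rule sq[of "t+1" x])
                fix j' assume j': "j' < t+1"
                show "u (x+j') = u (x+(t+1)+j')"
                proof (cases "j' = t")
                  case True then show ?thesis using e 3 by (simp add: algebra_simps)
                next
                  case False then show ?thesis using allC j' by (auto simp: algebra_simps)
                qed
              qed simp
            qed
            then show ?thesis using mis_C[of j q] j True q_def by auto
          next
            case False
            have "u (x+t') = u (x+t'+t+1)" using allC t' by auto
            moreover have "u (x+t') \<noteq> u (x+t)" using adj[of "x+t'"] t' by simp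
            ultimately have "u q \<noteq> u (q+t)" using 3 t' by (simp add: algebra_simps)
            then show ?thesis using mis_A[of j q] j False q_def by auto
          qed
        qed
      qed
      moreover have "card S + B \<le> m"
      proof -
        have "card S \<le> (\<Sum>q\<in>{x..<x+t}. card {q*B+a..<q*B+B})"
          unfolding S_def by (rule card_UN_le) simp
        also have "\<dots> = (\<Sum>q\<in>{x..<x+t}. s)" using aB by (intro sum.cong) auto
        also have "\<dots> = t*s" by simp
        finally have c: "card S \<le> t*s" .
        have "t'*s \<le> t'*B" using sB by (simp add: mult_le_mono2)
        moreover have "t*s = t'*s + s" "t*B = t'*B + B" using t' by simp_all
        ultimately show ?thesis using c m_eq by linarith
      qed
      moreover have "finite S" unfolding S_def by simp
      ultimately show ?thesis using viaS[of S] by simp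
    next
      case notC: False
      then obtain q1 where q1: "x \<le> q1" "q1 < x+t" "u q1 \<noteq> u (q1+t+1)" by auto
      show ?thesis
      proof (cases "t = 1")
        case True
        have qx: "q1 = x" using q1 True by simp
        define S where "S = {i..<x*B} \<union> {(x+1)*B + a..<i+m}"
        have ex: "(x+1)*B = x*B + B" by simp
        have "W - S \<subseteq> M"
        proof
          fix j assume j: "j \<in> W - S"
          define q where "q = j div B"
          have qb: "q*B \<le> j" "j < q*B + B" using qj[of j] unfolding q_def by auto
          have ji: "i \<le> j" "j < i + m" using Wi j by auto
          have jx: "x*B \<le> j" "j < x*B + B + a" using j ji ex unfolding S_def by auto
          have "x \<le> q" using cancel_le[OF B, of x q] qb jx by linarith
          moreover have "q \<le> x + 1" using cancel_le[OF B, of q "x+1"] qb jx ex aB by linarith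
          ultimately consider "q = x" | "q = x+1" by linarith
          then show "j \<in> M"
          proof cases
            case 1
            show ?thesis
            proof (cases "j - q*B < a")
              case True then show ?thesis using mis_A[of j q] j adj[of x] 1 \<open>t = 1\<close> q_def by auto
            next
              case False then show ?thesis using mis_C[of j q] j q1 qx 1 \<open>t = 1\<close> q_def by auto
            qed
          next
            case 2
            have "q*B = x*B + B" using 2 ex by simp
            then have "j - q*B < a" using jx aB by linarith
            then show ?thesis using mis_A[of j q] j adj[of "x+1"] 2 \<open>t = 1\<close> q_def by auto
          qed
        qed
        moreover have "card S + B \<le> m"
        proof -
          have "card S \<le> card {i..<x*B} + card {(x+1)*B + a..<i+m}"
            unfolding S_def by (rule card_Un_le)
          also have "\<dots> = (x*B - i) + (i + m - ((x+1)*B + a))" by simp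
          moreover have "m = B + s" using m_eq True by simp
          ultimately show ?thesis using ex aB x1 x2 by linarith
        qed
        ultimately show ?thesis using viaS[of S] unfolding S_def by simp
      next
        case False
        then obtain t'' where t'': "t' = Suc t''" using t' by (cases t') auto
        obtain y where y1: "i \<le> y*B" and y2: "y*B < i + B" using ceil_ex[OF B, of i] by auto
        show ?thesis
        proof (cases "\<forall>q. y \<le> q \<and> q < y+t' \<longrightarrow> u q = u (q+t)")
          case allA: True
          define S1 where "S1 = (\<Union>q\<in>{y..<y+t'}. {q*B..<q*B+a})"
          define S2 where "S2 = {(y+t')*B + a..<(y+t)*B + s}"
          define S where "S = S1 \<union> S2"
          have eyt: "(y+t)*B = y*B + t*B" "(y+t)*B = (y+t')*B + B" using t'
            by (simp_all add: add_mult_distrib)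
          have "W - S \<subseteq> M"
          proof
            fix j assume j: "j \<in> W - S"
            define q where "q = j div B"
            have qb: "q*B \<le> j" "j < q*B + B" using qj[of j] unfolding q_def by auto
            have ji: "i \<le> j" "j < i + m" using Wi j by auto
            have jlt: "j < (y+t)*B + s" using ji y1 m_eq eyt by linarith
            have "q \<le> y + t" using cancel_le[OF B, of q "y+t"] qb jlt sB by linarith
            moreover have "y \<le> q + 1" using cancel_le[OF B, of y "q+1"] qb ji y2
              by (simp add: add_mult_distrib)
            ultimately consider "q + 1 = y" | "y \<le> q \<and> q < y+t'" | "q = y+t'" | "q = y+t"
              using t' by linarith
            then show "j \<in> M"
            proof cases
              case 1
              show ?thesis
              proof (cases "j - q*B < a")
                case True
                have "u q \<noteq> u (q+t)"
                proof
                  assume e: "u q = u (q+t)"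
                  show False
                  proof (rule sq[of t q])
                    fix j' assume j': "j' < t"
                    show "u (q+j') = u (q+t+j')"
                    proof (cases j')
                      case 0 then show ?thesis using e by simp
                    next
                      case (Suc j'')
                      then have "u (y+j'') = u (y+j''+t)" using allA j' t' by auto
                      then show ?thesis using Suc 1[symmetric] by (simp add: algebra_simps)
                    qed
                  qed (use t' in simp)
                qed
                then show ?thesis using mis_A[of j q] j True q_def by auto
              next
                case False
                have "u y = u (y+t)" using allA t'' by auto
                moreover have "u q \<noteq> u y" using adj[of q] 1 by simp
                ultimately have "u q \<noteq> u (q+t+1)" using 1[symmetric] by (simp add: algebra_simps)
                then show ?thesis using mis_C[of j q] j False q_def by auto
              qed
            next
              case 2
              have o: "a \<le> j - q*B"
              proof (rule ccontr)
                assume "\<not> a \<le> j - q*B"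
                then have "j \<in> {q*B..<q*B+a}" using qb by auto
                then have "j \<in> S" using 2 unfolding S_def S1_def by auto
                then show False using j by auto
              qed
              have "u q = u (q+t)" using allA 2 by auto
              then have "u q \<noteq> u (q+t+1)" using adj[of "q+t"] by auto
              then show ?thesis using mis_C[of j q] j o q_def by auto
            next
              case 3
              have o: "j - q*B < a"
              proof (rule ccontr)
                assume "\<not> j - q*B < a"
                then have "j \<in> S2" using 3 jlt qb unfolding S2_def by auto
                then show False using j unfolding S_def by auto
              qed
              have "u q \<noteq> u (q+t)"
              proof
                assume e: "u q = u (q+t)"
                show False
                proof (rule sq[of t y])
                  fix j' assume j': "j' < t"
                  show "u (y+j') = u (y+t+j')"
                  proof (cases "j' = t'")
                    case True then show ?thesis using e 3 by (simp add: algebra_simps)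
                  next
                    case False then show ?thesis using allA j' t' by (auto simp: algebra_simps)
                  qed
                qed (use t' in simp)
              qed
              then show ?thesis using mis_A[of j q] j o q_def by auto
            next
              case 4
              have "j \<in> S2" using 4 jlt qb eyt aB unfolding S2_def by auto
              then show ?thesis using j unfolding S_def by auto
            qed
          qed
          moreover have "card S + B \<le> m"
          proof -
            have "card S1 \<le> (\<Sum>q\<in>{y..<y+t'}. card {q*B..<q*B+a})"
              unfolding S1_def by (rule card_UN_le) simp
            also have "\<dots> = t'*a" by simp
            finally have c1: "card S1 \<le> t'*a" .
            have c2: "card S2 = (y+t)*B + s - ((y+t')*B + a)" unfolding S2_def by simp
            then have c2': "card S2 = s + s" using eyt(2) aB(1) by linarith
            have "card S \<le> card S1 + card S2" unfolding S_def by (rule card_Un_le)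
            moreover have "s \<le> t'*s" using t'' by simp
            moreover have "t*B = t'*B + B" "t'*B = t'*a + t'*s" using t' aB(1)[symmetric]
              by (simp_all add: add_mult_distrib2)
            ultimately show ?thesis using c1 c2' m_eq by linarith
          qed
          moreover have "finite S" unfolding S_def S1_def S2_def by simp
          ultimately show ?thesis using viaS[of S] by simp
        next
          case False
          then obtain q2 where q2: "y \<le> q2" "q2 < y+t'" "u q2 \<noteq> u (q2+t)" by auto
          define T1 where "T1 = {q1*B+a..<q1*B+B}"
          define T2 where "T2 = {q2*B..<q2*B+a}"
          have e1: "(q1+1)*B \<le> (x+t)*B" using q1 by (intro mult_le_mono1) simp
          have e2: "(q2+1)*B \<le> (y+t')*B" using q2 by (intro mult_le_mono1) simp
          have e3: "x*B \<le> q1*B" "y*B \<le> q2*B" using q1 q2 by simp_all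
          have e4: "(x+t)*B = x*B + t*B" "(y+t')*B + B = y*B + t*B" "(q1+1)*B = q1*B+B"
             "(q2+1)*B = q2*B + B" using t' by (simp_all add: add_mult_distrib)
          have "T1 \<subseteq> M"
          proof
            fix j assume j: "j \<in> T1"
            have jq: "j div B = q1" using div_eqI'[OF B, of q1 j] j aB unfolding T1_def by auto
            have jj: "q1*B + a \<le> j" "j < q1*B + B" using j unfolding T1_def by auto
            have "i \<le> j" "j < i + m" using jj e1 e3 e4 x1 x2 m_eq aB by linarith+
            then have "j \<in> W" unfolding W_def by simp
            moreover have "a \<le> j - q1*B" using jj by linarith
            ultimately show "j \<in> M" using mis_C[of j q1] jq q1 by auto
          qed
          moreover have "T2 \<subseteq> M"
          proof
            fix j assume j: "j \<in> T2"
            have jq: "j div B = q2" using div_eqI'[OF B, of q2 j] j aB unfolding T2_def by auto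
            have jj: "q2*B \<le> j" "j < q2*B + a" using j unfolding T2_def by auto
            have "i \<le> j" using jj(1) e3(2) y1 by linarith
            moreover have "j < i + m" using jj(2) e2 e4(2) e4(4) y2 m_eq aB(1) by linarith
            ultimately have "i \<le> j" "j < i + m" by auto
            then have "j \<in> W" unfolding W_def by simp
            moreover have "j - q2*B < a" using jj by linarith
            ultimately show "j \<in> M" using mis_A[of j q2] jq q2 by auto
          qed
          moreover have "T1 \<inter> T2 = {}"
          proof (rule ccontr)
            assume "T1 \<inter> T2 \<noteq> {}"
            then obtain j where j: "j \<in> T1" "j \<in> T2" by auto
            have "j div B = q1" using div_eqI'[OF B, of q1 j] j aB unfolding T1_def by auto
            moreover have "j div B = q2" using div_eqI'[OF B, of q2 j] j aB unfolding T2_def by auto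
            ultimately show False using j unfolding T1_def T2_def by auto
          qed
          moreover have "card (T1 \<union> T2) = B"
            using calculation(3) card_Un_disjoint[of T1 T2] aB unfolding T1_def T2_def by simp
          ultimately show ?thesis using viaT[of "T1 \<union> T2"] by auto
        qed
      qed
    qed
    then show ?thesis unfolding M_def W_def .
  qed
qed


lemma dd_range: "dd n \<in> {-1, 0, 1}"
  unfolding dd_def T_def by auto

lemma main_free:
  fixes f :: "int \<Rightarrow> 'a" and k N :: nat
  assumes finj: "inj_on f {-1,0,1}"
  defines "g \<equiv> (\<lambda>j. f (dd (j div (k+1))))"
  shows "free_from (S3 A k) (map g [0..<N])"
  unfolding free_from_def
proof (intro allI impI)
  fix v assume "subword v (map g [0..<N])"
  then obtain p s' where ws: "map g [0..<N] = p @ v @ s'" unfolding subword_def by auto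
  show "v \<notin> S3 A k"
  proof
    assume "v \<in> S3 A k"
    then obtain X Y where v: "v = X @ Y" and len: "length X = length Y" and
      km: "k + 1 \<le> length X" and hk: "hamming X Y \<le> k" unfolding S3_def by auto
    define m where "m = length X"
    define P where "P = length p"
    have lenN: "P + m + m \<le> N" using arg_cong[OF ws, of length] v len unfolding P_def m_def by simp
    have Xi: "X ! i = g (P+i)" if "i < m" for i
    proof -
      have "map g [0..<N] ! (P+i) = X ! i" using ws v that unfolding P_def m_def
        by (simp add: nth_append)
      then show ?thesis using that lenN by simp
    qed
    have Yi: "Y ! i = g (P+m+i)" if "i < m" for i
    proof -
      have "map g [0..<N] ! (P+m+i) = Y ! i" using ws v that len unfolding P_def m_def
        by (simp add: nth_append)
      then show ?thesis using that lenN by (simp add: add.assoc)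
    qed
    have gneq: "g a \<noteq> g b \<longleftrightarrow> dd (a div (k+1)) \<noteq> dd (b div (k+1))" for a b
      unfolding g_def using finj dd_range inj_on_eq_iff[OF finj] by (metis dd_range)
    have "hamming X Y = card {i. i < m \<and> X ! i \<noteq> Y ! i}"
      unfolding hamming_def length_filter_conv_card using len unfolding m_def
      by (intro arg_cong[where f=card]) (auto simp: nth_zip)
    also have "{i. i < m \<and> X ! i \<noteq> Y ! i} = {i. i < m \<and> g (P+i) \<noteq> g (P+m+i)}"
      using Xi Yi by auto
    also have "card \<dots> = card ((\<lambda>i. P+i) ` {i. i < m \<and> g (P+i) \<noteq> g (P+m+i)})"
      by (rule card_image[symmetric]) (simp add: inj_on_def)
    also have "(\<lambda>i. P+i) ` {i. i < m \<and> g (P+i) \<noteq> g (P+m+i)} =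
        {j \<in> {P..<P+m}. dd (j div (k+1)) \<noteq> dd ((j+m) div (k+1))}"
    proof (rule set_eqI, rule iffI)
      fix j assume "j \<in> (\<lambda>i. P+i) ` {i. i < m \<and> g (P+i) \<noteq> g (P+m+i)}"
      then obtain i where "j = P + i" "i < m" "g (P+i) \<noteq> g (P+m+i)" by auto
      then show "j \<in> {j \<in> {P..<P+m}. dd (j div (k+1)) \<noteq> dd ((j+m) div (k+1))}"
        using gneq by (auto simp: algebra_simps)
    next
      fix j assume j: "j \<in> {j \<in> {P..<P+m}. dd (j div (k+1)) \<noteq> dd ((j+m) div (k+1))}"
      then have "j = P + (j - P)" "j - P < m" by auto
      moreover have "g (P + (j-P)) \<noteq> g (P+m+(j-P))" using j gneq by (auto simp: algebra_simps)
      ultimately show "j \<in> (\<lambda>i. P+i) ` {i. i < m \<and> g (P+i) \<noteq> g (P+m+i)}"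
        by (intro image_eqI[of _ _ "j - P"]) auto
    qed
    finally have "hamming X Y = card {j \<in> {P..<P+m}. dd (j div (k+1)) \<noteq> dd ((j+m) div (k+1))}" .
    moreover have "k + 1 \<le> card {j \<in> {P..<P+m}. dd (j div (k+1)) \<noteq> dd ((j+m) div (k+1))}"
      by (rule block_count) (use dd_sqfree km m_def in auto)
    ultimately show False using hk by simp
  qed
qed

theorem theorem5:
  fixes A :: "'a set" and n k :: nat
  assumes "finite A" and "card A = n" and "n \<ge> 3"
  shows "incomplete A (S3 A k)"
proof -
  obtain C where C: "C \<subseteq> A" "card C = 3" using obtain_subset_with_card_n[of 3 A] assms by auto
  then obtain a b c where abc: "C = {a,b,c}" "a \<noteq> b" "b \<noteq> c" "a \<noteq> c"
    using card_3_iff by metis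
  define f where "f = (\<lambda>v::int. if v = -1 then a else if v = 0 then b else c)"
  have finj: "inj_on f {-1,0,1}" unfolding f_def inj_on_def using abc by auto
  have fA: "f v \<in> A" for v unfolding f_def using C abc by auto
  define g where "g = (\<lambda>j. f (dd (j div (k+1))))"
  show ?thesis
    unfolding incomplete_def complete_def
  proof
    assume "\<exists>K. \<forall>w\<in>lists A. free_from (S3 A k) w \<longrightarrow> length w < K"
    then obtain K where K: "\<forall>w\<in>lists A. free_from (S3 A k) w \<longrightarrow> length w < K" by auto
    have "map g [0..<K] \<in> lists A" using fA unfolding g_def by auto
    moreover have "free_from (S3 A k) (map g [0..<K])"
      unfolding g_def by (rule main_free[OF finj])
    ultimately show False using K by fastforce
  qed
qed

end
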